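(* Let $G$ be a torsion-free locally compact abelian group such that $G_{op}=G$, and let $G^{*}$ be its minimal divisible extension. Then $G^{*}_{op}=G^{*}$.
   Context: A subgroup $H$ of an abelian group $G$ is pure if $nH=H\cap nG$ for every positive integer $n$. For an LCA group $G$, $G_{op}$ denotes the intersection of all open pure subgroups of $G$. For an LCA group $G$, $G^{*}$ denotes the minimal divisible extension (divisible hull) of $G$, topologized as an LCA group containing $G$ as an open subgroup (as in Hewitt–Ross 4.18.h). *)

theory Defs
  imports "HOL-Analysis.Analysis" "HOL-Algebra.Algebra"
begin

text \<open>Abelian groups are written multiplicatively (HOL-Algebra); the additive
 multiple n x of the paper is x [^] n here.\<close>

definition topological_comm_group :: "('a, 'b) monoid_scheme \<Rightarrow> 'a topology \<Rightarrow> bool" where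
  "topological_comm_group G T \<longleftrightarrow>
     comm_group G \<and> topspace T = carrier G \<and>
     continuous_map (prod_topology T T) T (\<lambda>(x, y). x \<otimes>\<^bsub>G\<^esub> y) \<and>
     continuous_map T T (\<lambda>x. inv\<^bsub>G\<^esub> x)"

definition LCA_group :: "('a, 'b) monoid_scheme \<Rightarrow> 'a topology \<Rightarrow> bool" where
  "LCA_group G T \<longleftrightarrow> topological_comm_group G T \<and> Hausdorff_space T \<and> locally_compact_space T"

definition multiples :: "('a, 'b) monoid_scheme \<Rightarrow> nat \<Rightarrow> 'a set \<Rightarrow> 'a set" where
  "multiples G n H = (\<lambda>x. x [^]\<^bsub>G\<^esub> n) ` H"

definition pure_subgroup :: "'a set \<Rightarrow> ('a, 'b) monoid_scheme \<Rightarrow> bool" where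
  "pure_subgroup H G \<longleftrightarrow> subgroup H G \<and>
     (\<forall>n::nat. n > 0 \<longrightarrow> multiples G n H = H \<inter> multiples G n (carrier G))"

definition G_op :: "('a, 'b) monoid_scheme \<Rightarrow> 'a topology \<Rightarrow> 'a set" where
  "G_op G T = \<Inter> {H. pure_subgroup H G \<and> openin T H}"

definition torsion_free :: "('a, 'b) monoid_scheme \<Rightarrow> bool" where
  "torsion_free G \<longleftrightarrow> (\<forall>x\<in>carrier G. \<forall>n::nat. n > 0 \<longrightarrow> x [^]\<^bsub>G\<^esub> n = \<one>\<^bsub>G\<^esub> \<longrightarrow> x = \<one>\<^bsub>G\<^esub>)"

definition divisible_group :: "('a, 'b) monoid_scheme \<Rightarrow> bool" where
  "divisible_group G \<longleftrightarrow> (\<forall>x\<in>carrier G. \<forall>n::nat. n > 0 \<longrightarrow> (\<exists>y\<in>carrier G. y [^]\<^bsub>G\<^esub> n = x))"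

text \<open>(H, TH) is the minimal divisible extension G* of the LCA group (G, TG), via the
 embedding f: H is an abelian topological group, f is an injective homomorphism
 which is a homeomorphism of G onto the open subgroup f(G) of H, H is divisible, and
 H is an essential extension of f(G) (every nonzero cyclic subgroup of H meets f(G)
 nontrivially), i.e. H is a minimal divisible extension (divisible hull) of G.\<close>
definition minimal_divisible_extension ::
  "('a, 'b) monoid_scheme \<Rightarrow> 'a topology \<Rightarrow> ('c, 'd) monoid_scheme \<Rightarrow> 'c topology \<Rightarrow> ('a \<Rightarrow> 'c) \<Rightarrow> bool" where
  "minimal_divisible_extension G TG H TH f \<longleftrightarrow>
     LCA_group H TH \<and>
     f \<in> hom G H \<and> inj_on f (carrier G) \<and>
     openin TH (f ` carrier G) \<and>
     homeomorphic_map TG (subtopology TH (f ` carrier G)) f \<and>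
     divisible_group H \<and>
     (\<forall>h\<in>carrier H. h \<noteq> \<one>\<^bsub>H\<^esub> \<longrightarrow>
        (\<exists>n::int. h [^]\<^bsub>H\<^esub> n \<in> f ` carrier G \<and> h [^]\<^bsub>H\<^esub> n \<noteq> \<one>\<^bsub>H\<^esub>))"

end

theory Submission
  imports Defs
begin

lemma tf_root_unique:
  fixes G (structure)
  assumes cg: "comm_group G" and tf: "\<forall>x\<in>carrier G. x [^]\<^bsub>G\<^esub> n = \<one>\<^bsub>G\<^esub> \<longrightarrow> x = \<one>\<^bsub>G\<^esub>"
    and a: "a \<in> carrier G" and b: "b \<in> carrier G" and e: "a [^]\<^bsub>G\<^esub> (n::nat) = b [^]\<^bsub>G\<^esub> n"
  shows "a = b"
proof -
  interpret comm_group G by (rule cg)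
  have "(a \<otimes> inv b) [^] n = a [^] n \<otimes> inv b [^] n"
    using a b by (simp add: pow_mult_distrib m_comm)
  also have "\<dots> = \<one>" using a b e by (simp add: nat_pow_inv)
  finally have "a \<otimes> inv b = \<one>" using tf a b by blast
  thus ?thesis using a b by (metis inv_equality inv_inv m_closed inv_closed l_inv r_inv)
qed

lemma H_tf:
  assumes gG: "group G" and gH: "group H"
    and tfG: "torsion_free G"
    and hom: "f \<in> hom G H" and inj: "inj_on f (carrier G)"
    and ess: "\<forall>h\<in>carrier H. h \<noteq> \<one>\<^bsub>H\<^esub> \<longrightarrow>
        (\<exists>m::int. h [^]\<^bsub>H\<^esub> m \<in> f ` carrier G \<and> h [^]\<^bsub>H\<^esub> m \<noteq> \<one>\<^bsub>H\<^esub>)"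
    and h: "h \<in> carrier H" and n: "n > 0" and e: "h [^]\<^bsub>H\<^esub> (n::nat) = \<one>\<^bsub>H\<^esub>"
  shows "h = \<one>\<^bsub>H\<^esub>"
proof (rule ccontr)
  assume ne: "h \<noteq> \<one>\<^bsub>H\<^esub>"
  then obtain m :: int where m: "h [^]\<^bsub>H\<^esub> m \<in> f ` carrier G" "h [^]\<^bsub>H\<^esub> m \<noteq> \<one>\<^bsub>H\<^esub>"
    using ess h by blast
  then obtain g where g: "g \<in> carrier G" "f g = h [^]\<^bsub>H\<^esub> m" by auto
  have "(h [^]\<^bsub>H\<^esub> m) [^]\<^bsub>H\<^esub> (int n) = (h [^]\<^bsub>H\<^esub> (int n)) [^]\<^bsub>H\<^esub> m"
    using h gH by (simp add: group.int_pow_pow mult.commute)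
  also have "\<dots> = \<one>\<^bsub>H\<^esub>" using e gH by (simp add: int_pow_int group.int_pow_one)
  finally have "(f g) [^]\<^bsub>H\<^esub> n = \<one>\<^bsub>H\<^esub>" using g by (simp add: int_pow_int)
  hence "f (g [^]\<^bsub>G\<^esub> n) = f \<one>\<^bsub>G\<^esub>"
    using hom_nat_pow[OF hom g(1) gG gH] hom gG gH
    by (metis group_hom.hom_one group_hom_axioms_def group_hom_def)
  hence "g [^]\<^bsub>G\<^esub> n = \<one>\<^bsub>G\<^esub>" using inj g gG
    by (meson group.is_monoid inj_onD monoid.nat_pow_closed monoid.one_closed)
  hence "g = \<one>\<^bsub>G\<^esub>" using tfG g n unfolding torsion_free_def by blast
  hence "h [^]\<^bsub>H\<^esub> m = \<one>\<^bsub>H\<^esub>" using g hom gG gH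
    by (metis group_hom.hom_one group_hom_axioms_def group_hom_def)
  thus False using m by simp
qed

theorem corollary10:
  fixes G :: "('a, 'b) monoid_scheme" and TG :: "'a topology"
    and H :: "('c, 'd) monoid_scheme" and TH :: "'c topology" and f :: "'a \<Rightarrow> 'c"
  assumes "LCA_group G TG"
    and "torsion_free G"
    and "G_op G TG = carrier G"
    and "minimal_divisible_extension G TG H TH f"
  shows "G_op H TH = carrier H"
proof -
  from assms(1) have cgG: "comm_group G" and tG: "topspace TG = carrier G"
    unfolding LCA_group_def topological_comm_group_def by auto
  from assms(4) have cgH: "comm_group H" and tH: "topspace TH = carrier H"
    and hom: "f \<in> hom G H" and inj: "inj_on f (carrier G)"
    and hm: "homeomorphic_map TG (subtopology TH (f ` carrier G)) f"
    and ess: "\<forall>h\<in>carrier H. h \<noteq> \<one>\<^bsub>H\<^esub> \<longrightarrow>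
        (\<exists>m::int. h [^]\<^bsub>H\<^esub> m \<in> f ` carrier G \<and> h [^]\<^bsub>H\<^esub> m \<noteq> \<one>\<^bsub>H\<^esub>)"
    unfolding minimal_divisible_extension_def LCA_group_def topological_comm_group_def by auto
  interpret G: comm_group G by (rule cgG)
  interpret H: comm_group H by (rule cgH)
  have gG: "group G" and gH: "group H" by unfold_locales
  have fc: "\<And>x. x \<in> carrier G \<Longrightarrow> f x \<in> carrier H" using hom by (auto simp: hom_def)
  have fm: "\<And>x y. x \<in> carrier G \<Longrightarrow> y \<in> carrier G \<Longrightarrow> f (x \<otimes>\<^bsub>G\<^esub> y) = f x \<otimes>\<^bsub>H\<^esub> f y"
    using hom by (auto simp: hom_def)
  have gh: "group_hom G H f" using hom gG gH by (simp add: group_hom_axioms_def group_hom_def)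
  have tfH: "\<And>h n. h \<in> carrier H \<Longrightarrow> n > 0 \<Longrightarrow> h [^]\<^bsub>H\<^esub> (n::nat) = \<one>\<^bsub>H\<^esub> \<Longrightarrow> h = \<one>\<^bsub>H\<^esub>"
    using H_tf[OF gG gH assms(2) hom inj ess] by blast
  have runi: "\<And>a b n. n > 0 \<Longrightarrow> a \<in> carrier H \<Longrightarrow> b \<in> carrier H \<Longrightarrow> a [^]\<^bsub>H\<^esub> (n::nat) = b [^]\<^bsub>H\<^esub> n \<Longrightarrow> a = b"
    using tf_root_unique[OF cgH] tfH by blast
  have key: "carrier H \<subseteq> P" if P: "pure_subgroup P H" "openin TH P" for P
  proof -
    have sP: "subgroup P H" using P(1) unfolding pure_subgroup_def by auto
    have pure: "\<And>n. n > 0 \<Longrightarrow> multiples H n P = P \<inter> multiples H n (carrier H)"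
      using P(1) unfolding pure_subgroup_def by auto
    define K where "K = {x \<in> carrier G. f x \<in> P}"
    have cm: "continuous_map TG (subtopology TH (f ` carrier G)) f"
      using hm homeomorphic_imp_continuous_map by blast
    have "openin (subtopology TH (f ` carrier G)) (P \<inter> f ` carrier G)"
      using P(2) by (simp add: openin_subtopology_Int)
    moreover have "K = {x \<in> topspace TG. f x \<in> P \<inter> f ` carrier G}"
      unfolding K_def using tG by auto
    ultimately have oK: "openin TG K"
      using openin_continuous_map_preimage[OF cm] by (metis Int_iff)
    have sK: "subgroup K G"
    proof (rule G.subgroupI)
      show "K \<subseteq> carrier G" unfolding K_def by blast
      have "f \<one>\<^bsub>G\<^esub> = \<one>\<^bsub>H\<^esub>" by (rule group_hom.hom_one[OF gh])
      hence "\<one>\<^bsub>G\<^esub> \<in> K" unfolding K_def using subgroup.one_closed[OF sP] by simp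
      thus "K \<noteq> {}" by blast
      show "inv\<^bsub>G\<^esub> a \<in> K" if a: "a \<in> K" for a
      proof -
        have ac: "a \<in> carrier G" "f a \<in> P" using a unfolding K_def by blast+
        have "f (inv\<^bsub>G\<^esub> a) = inv\<^bsub>H\<^esub> (f a)" by (rule group_hom.hom_inv[OF gh ac(1)])
        thus ?thesis unfolding K_def using subgroup.m_inv_closed[OF sP ac(2)] ac(1) by simp
      qed
      show "a \<otimes>\<^bsub>G\<^esub> b \<in> K" if a: "a \<in> K" and b: "b \<in> K" for a b
      proof -
        have ac: "a \<in> carrier G" "f a \<in> P" using a unfolding K_def by blast+
        have bc: "b \<in> carrier G" "f b \<in> P" using b unfolding K_def by blast+
        have "f (a \<otimes>\<^bsub>G\<^esub> b) = f a \<otimes>\<^bsub>H\<^esub> f b" by (rule fm[OF ac(1) bc(1)])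
        thus ?thesis unfolding K_def using subgroup.m_closed[OF sP ac(2) bc(2)] ac(1) bc(1) by simp
      qed
    qed
    have pK: "pure_subgroup K G"
      unfolding pure_subgroup_def
    proof (intro conjI allI impI sK)
      fix n :: nat assume n: "n > 0"
      show "multiples G n K = K \<inter> multiples G n (carrier G)"
      proof
        show "multiples G n K \<subseteq> K \<inter> multiples G n (carrier G)"
        proof
          fix x assume "x \<in> multiples G n K"
          then obtain y where y: "y \<in> carrier G" "f y \<in> P" "x = y [^]\<^bsub>G\<^esub> n"
            unfolding multiples_def K_def by blast
          have "f x = f y [^]\<^bsub>H\<^esub> n" unfolding y(3) by (rule group_hom.hom_nat_pow[OF gh y(1)])
          also have "\<dots> = f y [^]\<^bsub>H\<^esub> (int n)" by (simp only: int_pow_int)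
          finally have "f x \<in> P" using H.subgroup_int_pow_closed[OF sP y(2), of "int n"] by (simp only:)
          moreover have "x \<in> carrier G" unfolding y(3) using y(1) by (rule G.nat_pow_closed)
          moreover have "x \<in> multiples G n (carrier G)"
            unfolding multiples_def y(3) using y(1) by (rule imageI)
          ultimately show "x \<in> K \<inter> multiples G n (carrier G)"
            unfolding K_def by blast
        qed
        show "K \<inter> multiples G n (carrier G) \<subseteq> multiples G n K"
        proof
          fix x assume x: "x \<in> K \<inter> multiples G n (carrier G)"
          then obtain y where y: "y \<in> carrier G" "x = y [^]\<^bsub>G\<^esub> n"
            unfolding multiples_def by blast
          have fxP: "f x \<in> P" using x unfolding K_def by blast
          have fx: "f x = f y [^]\<^bsub>H\<^esub> n" unfolding y(2) by (rule group_hom.hom_nat_pow[OF gh y(1)])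
          have "f x \<in> multiples H n (carrier H)" unfolding fx multiples_def using fc[OF y(1)] by (rule imageI)
          hence "f x \<in> multiples H n P" using pure[OF n] fxP by blast
          then obtain p where p: "p \<in> P" "f x = p [^]\<^bsub>H\<^esub> n" unfolding multiples_def by blast
          have pc: "p \<in> carrier H" using p(1) subgroup.subset[OF sP] by blast
          have "p [^]\<^bsub>H\<^esub> n = f y [^]\<^bsub>H\<^esub> n" using p(2) fx by simp
          hence "p = f y" using runi[OF n pc fc[OF y(1)]] by blast
          hence "y \<in> K" using p(1) y(1) unfolding K_def by blast
          thus "x \<in> multiples G n K" unfolding y(2) multiples_def by (rule imageI)
        qed
      qed
    qed
    hence "K \<in> {H. pure_subgroup H G \<and> openin TG H}" using oK by blast
    hence "G_op G TG \<subseteq> K" unfolding G_op_def by (rule Inter_lower)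
    hence fG: "f ` carrier G \<subseteq> P" using assms(3) unfolding K_def by blast
    show ?thesis
    proof
      fix h assume h: "h \<in> carrier H"
      show "h \<in> P"
      proof (cases "h = \<one>\<^bsub>H\<^esub>")
        case True thus ?thesis using subgroup.one_closed[OF sP] by simp
      next
        case False
        then obtain m :: int where m0: "h [^]\<^bsub>H\<^esub> m \<in> f ` carrier G" "h [^]\<^bsub>H\<^esub> m \<noteq> \<one>\<^bsub>H\<^esub>"
          using ess h by blast
        have m: "h [^]\<^bsub>H\<^esub> m \<in> P" using m0(1) fG by (rule subsetD[rotated])
        have mn0: "m \<noteq> 0" using m0(2) by (cases "m = 0") simp_all
        define k where "k = nat \<bar>m\<bar>"
        have k: "k > 0" using mn0 unfolding k_def by simp
        have hk: "h [^]\<^bsub>H\<^esub> k \<in> P"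
        proof (cases "m < 0")
          case True
          have "h [^]\<^bsub>H\<^esub> m = inv\<^bsub>H\<^esub> (h [^]\<^bsub>H\<^esub> (nat (- m)))"
            using int_pow_def2[of H h m] True by simp
          moreover have "nat (- m) = k" unfolding k_def using True by simp
          ultimately have e: "h [^]\<^bsub>H\<^esub> m = inv\<^bsub>H\<^esub> (h [^]\<^bsub>H\<^esub> k)" by simp
          have "inv\<^bsub>H\<^esub> (h [^]\<^bsub>H\<^esub> m) \<in> P" using subgroup.m_inv_closed[OF sP m] .
          moreover have "inv\<^bsub>H\<^esub> (h [^]\<^bsub>H\<^esub> m) = h [^]\<^bsub>H\<^esub> k"
            unfolding e using h by (simp only: H.inv_inv H.nat_pow_closed)
          ultimately show ?thesis by simp
        next
          case False
          have "h [^]\<^bsub>H\<^esub> m = h [^]\<^bsub>H\<^esub> (nat m)"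
            using int_pow_def2[of H h m] False by simp
          moreover have "nat m = k" unfolding k_def using False by simp
          ultimately show ?thesis using m by simp
        qed
        have hkc: "h [^]\<^bsub>H\<^esub> k \<in> multiples H k (carrier H)"
          unfolding multiples_def using h by (rule imageI)
        have "h [^]\<^bsub>H\<^esub> k \<in> multiples H k P" using pure[OF k] hk hkc by blast
        then obtain p where p: "p \<in> P" "h [^]\<^bsub>H\<^esub> k = p [^]\<^bsub>H\<^esub> k"
          unfolding multiples_def by blast
        have pc: "p \<in> carrier H" using p(1) subgroup.subset[OF sP] by blast
        have "h = p" using runi[OF k h pc p(2)] .
        thus ?thesis using p(1) by simp
      qed
    qed
  qed
  have "pure_subgroup (carrier H) H"
    unfolding pure_subgroup_def multiples_def using H.subgroup_self by auto
  moreover have "openin TH (carrier H)" using tH openin_topspace by metis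
  ultimately show ?thesis unfolding G_op_def using key by blast
qed

end
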